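(* Let $s,\alpha\in\mathbb{R}$ with $s+\alpha\ge0$, $\alpha<3/4$ and $s>-3/4$. Then for every $t\in\mathbb{R}$ the bilinear operator $B_2$ defined in the context maps $\dot H^s\times\dot H^s$ into $\dot H^{s+\alpha}$ and satisfies $$\|B_2(u,v)\|_{\dot H^{s+\alpha}}\le c_2'(s,\alpha)\|u\|_{\dot H^s}\|v\|_{\dot H^s},$$ with a constant $c_2'(s,\alpha)$ depending only on $s,\alpha$.
   Context: Write $\mathbb{Z}_0=\mathbb{Z}\setminus\{0\}$. For $s\in\mathbb{R}$, $\dot H^s$ denotes the Hilbert space of complex sequences $v=(v_k)_{k\in\mathbb{Z}_0}$ with $\|v\|_{\dot H^s}^2=\sum_{k\in\mathbb{Z}_0}|k|^{2s}|v_k|^2<\infty$. For $t\in\mathbb{R}$, $$B_2(u,v)_k=\sum_{k_1+k_2=k,\ k_1,k_2\in\mathbb{Z}_0}\frac{e^{3ikk_1k_2t}u_{k_1}v_{k_2}}{k_1k_2},\qquad k\in\mathbb{Z}_0.$$ *)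

theory Defs
  imports "HOL-Analysis.Analysis"
begin

text \<open>Sequences indexed by the nonzero integers are modelled as functions
  int => complex; the value at 0 is ignored everywhere.\<close>

definition Z0 :: "int set" where
  "Z0 = UNIV - {0}"

definition in_Hdot :: "real \<Rightarrow> (int \<Rightarrow> complex) \<Rightarrow> bool" where
  "in_Hdot s v \<longleftrightarrow> (\<lambda>k. \<bar>real_of_int k\<bar> powr (2 * s) * (cmod (v k))^2) summable_on Z0"

definition Hdot_norm :: "real \<Rightarrow> (int \<Rightarrow> complex) \<Rightarrow> real" where
  "Hdot_norm s v = sqrt (\<Sum>\<^sub>\<infinity>k\<in>Z0. \<bar>real_of_int k\<bar> powr (2 * s) * (cmod (v k))^2)"

definition B2_term :: "real \<Rightarrow> (int \<Rightarrow> complex) \<Rightarrow> (int \<Rightarrow> complex) \<Rightarrow> int \<Rightarrow> int \<Rightarrow> complex" where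
  "B2_term t u v k k1 =
     exp (\<i> * of_real (3 * real_of_int k * real_of_int k1 * real_of_int (k - k1) * t))
       * u k1 * v (k - k1) / (of_int k1 * of_int (k - k1))"

definition B2_index :: "int \<Rightarrow> int set" where
  "B2_index k = {k1. k1 \<noteq> 0 \<and> k - k1 \<noteq> 0}"

definition B2 :: "real \<Rightarrow> (int \<Rightarrow> complex) \<Rightarrow> (int \<Rightarrow> complex) \<Rightarrow> int \<Rightarrow> complex" where
  "B2 t u v k = (\<Sum>\<^sub>\<infinity>k1\<in>B2_index k. B2_term t u v k k1)"

end

theory Submission
  imports Defs
begin

lemma int_powr_summable:
  fixes r :: real assumes "r > 1"
  shows "(\<lambda>j::int. \<bar>real_of_int j\<bar> powr (-r)) summable_on UNIV"
proof -
  let ?g = "\<lambda>j::int. \<bar>real_of_int j\<bar> powr (-r)"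
  have sn: "(\<lambda>n::nat. real n powr (-r)) summable_on UNIV"
    using assms by (subst summable_on_UNIV_nonneg_real_iff) (auto simp: summable_real_powr_iff)
  have "?g summable_on (range int)"
    by (subst summable_on_reindex) (auto simp: o_def sn)
  moreover have "?g summable_on (range (\<lambda>n. - int n))"
    by (subst summable_on_reindex) (auto simp: o_def sn inj_on_def)
  ultimately have "?g summable_on (range int \<union> range (\<lambda>n. - int n))"
    by (rule summable_on_union)
  moreover have "range int \<union> range (\<lambda>n. - int n) = (UNIV::int set)"
    by (auto, metis int_cases2 rangeI)
  ultimately show ?thesis by simp
qed

lemma shift_summable:
  fixes f :: "int \<Rightarrow> real"
  assumes "f summable_on UNIV"
  shows "(\<lambda>j. f (k - j)) summable_on UNIV" and "infsum (\<lambda>j. f (k - j)) UNIV = infsum f UNIV"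
proof -
  show "(\<lambda>j. f (k - j)) summable_on UNIV"
    using assms by (subst summable_on_reindex_bij_witness[where i="\<lambda>j. k - j" and j="\<lambda>j. k - j" and T=UNIV and h=f]) auto
  show "infsum (\<lambda>j. f (k - j)) UNIV = infsum f UNIV"
    by (rule infsum_reindex_bij_witness[where i="\<lambda>j. k - j" and j="\<lambda>j. k - j"]) auto
qed

lemma infsum_finite_sum:
  fixes f :: "'i \<Rightarrow> 'a \<Rightarrow> real"
  assumes "finite F" "\<And>i. i \<in> F \<Longrightarrow> f i summable_on A"
  shows "(\<lambda>x. \<Sum>i\<in>F. f i x) summable_on A \<and> infsum (\<lambda>x. \<Sum>i\<in>F. f i x) A = (\<Sum>i\<in>F. infsum (f i) A)"
  using assms
proof (induction F rule: finite_induct)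
  case empty then show ?case by simp
next
  case (insert i F)
  then show ?case by (simp add: summable_on_add infsum_add)
qed

lemma lambda_trick:
  fixes X M T :: real
  assumes "X \<ge> 0" "M > 0" "T \<ge> 0" "\<And>l. l > 0 \<Longrightarrow> X \<le> (l * M + T / l) / 2"
  shows "X^2 \<le> M * T"
proof (cases "T > 0")
  case True
  define l where "l = sqrt T / sqrt M"
  have lp: "l > 0" using True assms by (simp add: l_def)
  have sM: "sqrt M * sqrt M = M" and sT: "sqrt T * sqrt T = T" using assms by auto
  have sMp: "sqrt M > 0" and sTp: "sqrt T > 0" using assms True by auto
  have "l * M = sqrt T * sqrt M" unfolding l_def using sMp
    by (subst sM[symmetric]) (simp add: field_simps)
  moreover have "T / l = sqrt T * sqrt M" unfolding l_def using sMp sTp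
    by (subst sT[symmetric]) (simp add: field_simps)
  ultimately have "X \<le> sqrt T * sqrt M" using assms(4)[OF lp] by (simp add: mult.commute)
  then have "X^2 \<le> (sqrt T * sqrt M)^2" using assms(1) by (intro power_mono) auto
  also have "\<dots> = M * T" using sM sT by (simp add: power2_eq_square algebra_simps)
  finally show ?thesis .
next
  case False
  then have T0: "T = 0" using assms by simp
  show ?thesis
  proof (cases "X > 0")
    case True
    have "X \<le> ((X/M) * M + T/(X/M))/2" using assms(4)[of "X/M"] True assms by simp
    then show ?thesis using T0 True assms by simp
  next
    case False then show ?thesis using assms T0 by simp
  qed
qed


lemma W_bound_aux:
  fixes x y z s \<alpha> :: real
  assumes "1 \<le> x" "x \<le> y" "0 \<le> z" "z \<le> x + y" "s + \<alpha> \<ge> 0" "\<alpha> < 1" "s > -1"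
  shows "z powr (s+\<alpha>) * x powr (-1-s) * y powr (-1-s) \<le> 2 powr (s+\<alpha>) * x powr (\<alpha>-2-s)"
proof -
  have y0: "y > 0" "x > 0" using assms by auto
  have "z powr (s+\<alpha>) \<le> (2*y) powr (s+\<alpha>)" using assms by (intro powr_mono2) auto
  also have "\<dots> = 2 powr (s+\<alpha>) * y powr (s+\<alpha>)" by (simp add: powr_mult)
  finally have 1: "z powr (s+\<alpha>) \<le> 2 powr (s+\<alpha>) * y powr (s+\<alpha>)" .
  have "z powr (s+\<alpha>) * (x powr (-1-s) * y powr (-1-s)) \<le> 2 powr (s+\<alpha>) * y powr (s+\<alpha>) * (x powr (-1-s) * y powr (-1-s))"
    by (rule mult_right_mono[OF 1]) auto
  also have "\<dots> = 2 powr (s+\<alpha>) * x powr (-1-s) * (y powr (s+\<alpha>) * y powr (-1-s))" by simp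
  also have "y powr (s+\<alpha>) * y powr (-1-s) = y powr (\<alpha> - 1)" by (simp add: powr_add[symmetric])
  also have "y powr (\<alpha> - 1) \<le> x powr (\<alpha> - 1)" using assms by (intro powr_mono2') auto
  then have "2 powr (s+\<alpha>) * x powr (-1-s) * y powr (\<alpha> - 1) \<le> 2 powr (s+\<alpha>) * x powr (-1-s) * x powr (\<alpha> - 1)"
    by (intro mult_left_mono) auto
  also have "2 powr (s+\<alpha>) * x powr (-1-s) * x powr (\<alpha> - 1) = 2 powr (s+\<alpha>) * x powr (\<alpha>-2-s)"
    by (simp add: mult.assoc powr_add[symmetric] algebra_simps)
  finally show ?thesis by (simp add: mult.assoc)
qed

lemma W_bound:
  fixes x y z s \<alpha> :: real
  assumes "1 \<le> x" "1 \<le> y" "0 \<le> z" "z \<le> x + y" "s + \<alpha> \<ge> 0" "\<alpha> < 1" "s > -1"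
  shows "(z powr (s+\<alpha>) * x powr (-1-s) * y powr (-1-s))^2 \<le> 4 powr (s+\<alpha>) * (x powr (-(4+2 * s-2*\<alpha>)) + y powr (-(4+2 * s-2*\<alpha>)))"
proof -
  have key: "(z powr (s+\<alpha>) * x powr (-1-s) * y powr (-1-s))^2 \<le> 4 powr (s+\<alpha>) * x powr (-(4+2 * s-2*\<alpha>))"
    if "1 \<le> x" "x \<le> y" "0 \<le> z" "z \<le> x + y" for x y
  proof -
    have "(z powr (s+\<alpha>) * x powr (-1-s) * y powr (-1-s))^2 \<le> (2 powr (s+\<alpha>) * x powr (\<alpha>-2-s))^2"
      using W_bound_aux[OF that assms(5-7)] by (intro power_mono) auto
    also have "\<dots> = (2 powr (s+\<alpha>))^2 * (x powr (\<alpha>-2-s))^2" by (simp add: power_mult_distrib)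
    also have "(2 powr (s+\<alpha>))^2 = 4 powr (s+\<alpha>)"
      by (simp add: power2_eq_square powr_mult[symmetric])
    also have "(x powr (\<alpha>-2-s))^2 = x powr (-(4+2 * s-2*\<alpha>))"
      by (simp add: power2_eq_square powr_add[symmetric]) (simp add: algebra_simps)
    finally show ?thesis .
  qed
  have nn: "0 \<le> x powr a" "0 \<le> y powr a" for a by auto
  show ?thesis
  proof (cases "x \<le> y")
    case True
    from key[OF assms(1) True assms(3,4)] show ?thesis
      by (smt (verit, best) nn mult_left_mono powr_ge_zero)
  next
    case False
    from key[of y x] assms False have "(z powr (s+\<alpha>) * y powr (-1-s) * x powr (-1-s))^2 \<le> 4 powr (s+\<alpha>) * y powr (-(4+2 * s-2*\<alpha>))"
      by (simp add: add.commute)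
    then show ?thesis
      by (smt (verit, best) nn mult_left_mono powr_ge_zero mult.commute mult.assoc)
  qed
qed


definition aa :: "real \<Rightarrow> (int \<Rightarrow> complex) \<Rightarrow> int \<Rightarrow> real" where
  "aa s u k = \<bar>real_of_int k\<bar> powr s * cmod (u k)"

lemma aa_nonneg: "aa s u k \<ge> 0" by (simp add: aa_def)

lemma aa_sq: "(aa s u k)^2 = \<bar>real_of_int k\<bar> powr (2 * s) * (cmod (u k))^2"
proof -
  have "\<bar>real_of_int k\<bar> powr (2 * s) = \<bar>real_of_int k\<bar> powr s * \<bar>real_of_int k\<bar> powr s"
    by (simp add: powr_add[symmetric])
  then show ?thesis by (simp add: aa_def power2_eq_square)
qed

lemma inv_powr: "x > 0 \<Longrightarrow> x powr s * x powr (-1-s) = 1 / (x::real)"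
  by (simp add: powr_add[symmetric] powr_neg_one)

lemma term_norm:
  assumes "k1 \<noteq> 0" "k - k1 \<noteq> 0"
  shows "norm (B2_term t u v k k1) = aa s u k1 * aa s v (k-k1) *
           (\<bar>real_of_int k1\<bar> powr (-1-s) * \<bar>real_of_int (k-k1)\<bar> powr (-1-s))"
proof -
  have x: "\<bar>real_of_int k1\<bar> > 0" "\<bar>real_of_int (k-k1)\<bar> > 0" using assms by auto
  have "norm (B2_term t u v k k1) = cmod (u k1) * cmod (v (k-k1)) / (\<bar>real_of_int k1\<bar> * \<bar>real_of_int (k-k1)\<bar>)"
    unfolding B2_term_def by (simp add: norm_mult norm_divide norm_of_int del: of_int_diff)
  also have "\<dots> = (cmod (u k1) * (\<bar>real_of_int k1\<bar> powr s * \<bar>real_of_int k1\<bar> powr (-1-s))) *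
                  (cmod (v (k-k1)) * (\<bar>real_of_int (k-k1)\<bar> powr s * \<bar>real_of_int (k-k1)\<bar> powr (-1-s)))"
    using x by (simp add: inv_powr)
  also have "\<dots> = aa s u k1 * aa s v (k-k1) *
           (\<bar>real_of_int k1\<bar> powr (-1-s) * \<bar>real_of_int (k-k1)\<bar> powr (-1-s))"
    by (simp add: aa_def algebra_simps)
  finally show ?thesis .
qed


lemma amgm_l: "(l::real) > 0 \<Longrightarrow> x * y \<le> (l * x^2 + y^2 / l) / 2"
proof -
  assume l: "l > 0"
  have "0 \<le> (l*x - y)^2" by simp
  then have "2 * l * (x*y) \<le> l^2 * x^2 + y^2" by (simp add: power2_eq_square algebra_simps)
  then have "2 * l * (x*y) / l \<le> (l^2 * x^2 + y^2) / l" using l by (intro divide_right_mono) auto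
  then show ?thesis using l by (simp add: power2_eq_square field_simps)
qed

lemma le1_powr: "(x::real) \<ge> 1 \<Longrightarrow> e \<le> 0 \<Longrightarrow> x powr e \<le> 1"
  using powr_mono2'[of e 1 x] by simp

definition Mc :: "real \<Rightarrow> real \<Rightarrow> real" where
  "Mc s \<alpha> = 2 * 4 powr (s+\<alpha>) * infsum (\<lambda>j::int. \<bar>real_of_int j\<bar> powr (-(4 + 2 * s - 2 * \<alpha>))) UNIV + 1"

lemma U_UNIV:
  assumes "in_Hdot s u"
  shows "(\<lambda>k. \<bar>real_of_int k\<bar> powr (2 * s) * (cmod (u k))^2) summable_on UNIV"
    and "infsum (\<lambda>k. \<bar>real_of_int k\<bar> powr (2 * s) * (cmod (u k))^2) UNIV = (Hdot_norm s u)^2"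
proof -
  have e: "x \<in> UNIV - Z0 \<Longrightarrow> \<bar>real_of_int x\<bar> powr (2 * s) * (cmod (u x))^2 = 0" for x
    by (simp add: Z0_def)
  show "(\<lambda>k. \<bar>real_of_int k\<bar> powr (2 * s) * (cmod (u k))^2) summable_on UNIV"
    using assms unfolding in_Hdot_def by (subst summable_on_cong_neutral[where g=\<open>\<lambda>k. \<bar>real_of_int k\<bar> powr (2 * s) * (cmod (u k))^2\<close> and T=Z0]) (auto simp: e)
  have "infsum (\<lambda>k. \<bar>real_of_int k\<bar> powr (2 * s) * (cmod (u k))^2) UNIV = infsum (\<lambda>k. \<bar>real_of_int k\<bar> powr (2 * s) * (cmod (u k))^2) Z0"
    by (rule infsum_cong_neutral) (auto simp: e)
  also have "\<dots> = (Hdot_norm s u)^2" unfolding Hdot_norm_def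
    by (subst real_sqrt_pow2) (auto intro!: infsum_nonneg)
  finally show "infsum (\<lambda>k. \<bar>real_of_int k\<bar> powr (2 * s) * (cmod (u k))^2) UNIV = (Hdot_norm s u)^2" .
qed


lemma per_k:
  fixes s \<alpha> t :: real and k :: int and u v :: "int \<Rightarrow> complex"
  assumes sa: "s + \<alpha> \<ge> 0" "\<alpha> < 3/4" "s > -3/4" and k0: "k \<noteq> 0"
  defines "U \<equiv> \<lambda>k. \<bar>real_of_int k\<bar> powr (2 * s) * (cmod (u k))^2"
  defines "V \<equiv> \<lambda>k. \<bar>real_of_int k\<bar> powr (2 * s) * (cmod (v k))^2"
  assumes Us: "U summable_on UNIV" and Vs: "V summable_on UNIV"
  shows "(\<lambda>k1. norm (B2_term t u v k k1)) summable_on B2_index k"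
    and "(\<lambda>k1. U k1 * V (k - k1)) summable_on UNIV"
    and "\<bar>real_of_int k\<bar> powr (2 * (s+\<alpha>)) * (cmod (B2 t u v k))^2 \<le> Mc s \<alpha> * infsum (\<lambda>k1. U k1 * V (k - k1)) UNIV"
proof -
  define I where "I = B2_index k"
  define r where "r = 4 + 2 * s - 2 * \<alpha>"
  have r1: "r > 1" using sa by (simp add: r_def)
  define P where "P = (\<lambda>j::int. \<bar>real_of_int j\<bar> powr (-r))"
  define K where "K = (4::real) powr (s+\<alpha>)"
  define Z where "Z = infsum P UNIV"
  define M where "M = Mc s \<alpha>"
  have MZ: "M = 2 * K * Z + 1" unfolding M_def Mc_def K_def Z_def P_def r_def by simp
  have Ps: "P summable_on UNIV" unfolding P_def by (rule int_powr_summable[OF r1])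
  have Z0: "Z \<ge> 0" unfolding Z_def P_def by (rule infsum_nonneg) auto
  have K0: "K > 0" unfolding K_def by simp
  have KZ0: "2 * K * Z \<ge> 0" using Z0 K0 by simp
  have M0: "M > 0" using MZ KZ0 by linarith
  have U_aa: "U j = (aa s u j)^2" for j unfolding U_def by (simp add: aa_sq)
  have V_aa: "V j = (aa s v j)^2" for j unfolding V_def by (simp add: aa_sq)
  have U0: "U j \<ge> 0" "V j \<ge> 0" for j unfolding U_def V_def by auto
  have Iprop: "k1 \<noteq> 0" "k - k1 \<noteq> 0" if "k1 \<in> I" for k1 using that by (auto simp: I_def B2_index_def)
  define g where "g = (\<lambda>k1. \<bar>real_of_int k1\<bar> powr (-1-s) * \<bar>real_of_int (k-k1)\<bar> powr (-1-s))"
  define ab where "ab = (\<lambda>k1. aa s u k1 * aa s v (k-k1))"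
  have tn: "norm (B2_term t u v k k1) = ab k1 * g k1" if "k1 \<in> I" for k1
    unfolding ab_def g_def using term_norm[OF Iprop[OF that]] by simp
  have g1: "g k1 \<le> 1" "g k1 \<ge> 0" if "k1 \<in> I" for k1
  proof -
    have "\<bar>real_of_int k1\<bar> \<ge> 1" "\<bar>real_of_int (k-k1)\<bar> \<ge> 1" using Iprop[OF that] by linarith+
    then have "\<bar>real_of_int k1\<bar> powr (-1-s) \<le> 1" "\<bar>real_of_int (k-k1)\<bar> powr (-1-s) \<le> 1"
      using sa by (auto intro!: le1_powr)
    then show "g k1 \<le> 1" unfolding g_def by (simp add: mult_le_one)
    show "g k1 \<ge> 0" unfolding g_def by simp
  qed
  have ab0: "ab k1 \<ge> 0" for k1 unfolding ab_def by (simp add: aa_nonneg)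
  have ab2: "(ab k1)^2 = U k1 * V (k-k1)" for k1 unfolding ab_def U_aa V_aa by (simp add: power_mult_distrib)
  have Vsh: "(\<lambda>k1. V (k - k1)) summable_on UNIV" using shift_summable(1)[OF Vs] .
  have S1: "(\<lambda>k1. (U k1 + V (k - k1)) / 2) summable_on UNIV"
    using summable_on_cmult_left[OF summable_on_add[OF Us Vsh], of "1/2"] by (simp add: divide_simps)
  have "norm (B2_term t u v k k1) \<le> (U k1 + V (k - k1)) / 2" if "k1 \<in> I" for k1
  proof -
    have "ab k1 * g k1 \<le> ab k1" using g1[OF that] ab0 by (simp add: mult_left_le)
    also have "ab k1 \<le> (U k1 + V (k-k1)) / 2" unfolding ab_def U_aa V_aa
      using amgm_l[of 1 "aa s u k1" "aa s v (k-k1)"] by simp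
    finally show ?thesis using tn[OF that] by simp
  qed
  then show P1: "(\<lambda>k1. norm (B2_term t u v k k1)) summable_on B2_index k"
    unfolding I_def[symmetric]
    by (intro summable_on_comparison_test[OF summable_on_subset_banach[OF S1]]) auto
  define B where "B = infsum V UNIV"
  have VB: "V j \<le> B" for j
    using finite_sum_le_infsum[OF Vs, of "{j}"] U0 unfolding B_def by simp
  show G: "(\<lambda>k1. U k1 * V (k - k1)) summable_on UNIV"
  proof (rule summable_on_comparison_test[OF summable_on_cmult_left[OF Us, of B]])
    fix k1 :: int
    show "U k1 * V (k - k1) \<le> U k1 * B" by (rule mult_left_mono[OF VB U0(1)])
    show "0 \<le> U k1 * V (k - k1)" using U0 by simp
  qed
  define T where "T = infsum (\<lambda>k1. U k1 * V (k - k1)) UNIV"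
  have Tnn: "T \<ge> 0" unfolding T_def by (rule infsum_nonneg) (simp add: U0)
  define W where "W = (\<lambda>k1. \<bar>real_of_int k\<bar> powr (s+\<alpha>) * g k1)"
  have W0: "W k1 \<ge> 0" for k1 unfolding W_def g_def by simp
  have W2: "(W k1)^2 \<le> K * (P k1 + P (k - k1))" if "k1 \<in> I" for k1
  proof -
    have "\<bar>real_of_int k\<bar> \<le> \<bar>real_of_int k1\<bar> + \<bar>real_of_int (k - k1)\<bar>" by simp
    moreover have "\<bar>real_of_int k1\<bar> \<ge> 1" "\<bar>real_of_int (k-k1)\<bar> \<ge> 1" using Iprop[OF that] by linarith+
    ultimately show ?thesis
      using W_bound[of "\<bar>real_of_int k1\<bar>" "\<bar>real_of_int (k-k1)\<bar>" "\<bar>real_of_int k\<bar>" s \<alpha>] sa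
      unfolding W_def g_def K_def P_def r_def by (simp add: mult.assoc)
  qed
  have Psh: "(\<lambda>k1. P (k - k1)) summable_on UNIV" using shift_summable(1)[OF Ps] .
  have PS2: "(\<lambda>k1. K * (P k1 + P (k - k1))) summable_on UNIV"
    by (intro summable_on_cmult_right summable_on_add Ps Psh)
  have sumP: "infsum (\<lambda>k1. K * (P k1 + P (k - k1))) UNIV = 2 * K * Z"
    by (simp add: infsum_cmult_right infsum_add Ps Psh summable_on_add shift_summable(2)[OF Ps] Z_def)
  have P0: "P j \<ge> 0" for j unfolding P_def by simp
  have W2s: "(\<lambda>k1. (W k1)^2) summable_on I"
    by (rule summable_on_comparison_test[OF summable_on_subset_banach[OF PS2]]) (auto intro: W2)
  have W2le: "infsum (\<lambda>k1. (W k1)^2) I \<le> M"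
  proof -
    have "infsum (\<lambda>k1. (W k1)^2) I \<le> infsum (\<lambda>k1. K * (P k1 + P (k - k1))) UNIV"
      by (rule infsum_mono_neutral[OF W2s PS2]) (auto intro: W2 simp: P0 K0 less_imp_le)
    then show ?thesis using sumP MZ by simp
  qed
  have ab2s: "(\<lambda>k1. (ab k1)^2) summable_on I"
    unfolding ab2 by (rule summable_on_subset_banach[OF G]) simp
  have ab2le: "infsum (\<lambda>k1. (ab k1)^2) I \<le> T"
    unfolding T_def ab2 by (rule infsum_mono_neutral[OF _ G]) (auto simp: U0 summable_on_subset_banach[OF G])
  have Rh: "((\<lambda>k1. (l * (W k1)^2 + (ab k1)^2 / l) / 2) has_sum ((l * infsum (\<lambda>k1. (W k1)^2) I + infsum (\<lambda>k1. (ab k1)^2) I / l) / 2)) I" for l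
    by (intro has_sum_divide_const has_sum_add has_sum_cmult_right has_sum_infsum W2s ab2s)
  have Rs: "(\<lambda>k1. (l * (W k1)^2 + (ab k1)^2 / l) / 2) summable_on I" for l
    using Rh[of l] by (auto simp: summable_on_def)
  have Rsum: "infsum (\<lambda>k1. (l * (W k1)^2 + (ab k1)^2 / l) / 2) I = (l * infsum (\<lambda>k1. (W k1)^2) I + infsum (\<lambda>k1. (ab k1)^2) I / l) / 2" for l
    using Rh[of l] by (rule infsumI)
  have Wab_le: "W k1 * ab k1 \<le> (l * (W k1)^2 + (ab k1)^2 / l) / 2" if "l > 0" for l k1
    using amgm_l[OF that] .
  have Wabs: "(\<lambda>k1. W k1 * ab k1) summable_on I"
    by (rule summable_on_comparison_test[OF Rs[of 1]]) (use Wab_le[of 1] W0 ab0 in auto)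
  define X where "X = infsum (\<lambda>k1. W k1 * ab k1) I"
  have X0: "X \<ge> 0" unfolding X_def by (rule infsum_nonneg) (simp add: W0 ab0)
  have Xb: "X \<le> (l * M + T / l) / 2" if l: "l > 0" for l
  proof -
    have "X \<le> infsum (\<lambda>k1. (l * (W k1)^2 + (ab k1)^2 / l) / 2) I"
      unfolding X_def by (rule infsum_mono[OF Wabs Rs]) (rule Wab_le[OF l])
    also have "\<dots> \<le> (l * M + T / l) / 2" unfolding Rsum
      using W2le ab2le l by (intro divide_right_mono add_mono mult_left_mono) auto
    finally show ?thesis .
  qed
  have X2: "X^2 \<le> M * T" by (rule lambda_trick[OF X0 M0 Tnn Xb])
  have nB: "cmod (B2 t u v k) \<le> infsum (\<lambda>k1. norm (B2_term t u v k k1)) I"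
    unfolding B2_def I_def by (rule norm_infsum_bound) (use P1 in simp)
  have "\<bar>real_of_int k\<bar> powr (s+\<alpha>) * infsum (\<lambda>k1. norm (B2_term t u v k k1)) I
        = infsum (\<lambda>k1. \<bar>real_of_int k\<bar> powr (s+\<alpha>) * norm (B2_term t u v k k1)) I"
    by (rule infsum_cmult_right[symmetric]) (use P1 I_def in simp)
  also have "\<dots> = X" unfolding X_def
    by (rule infsum_cong) (simp add: tn W_def)
  finally have eqX: "\<bar>real_of_int k\<bar> powr (s+\<alpha>) * infsum (\<lambda>k1. norm (B2_term t u v k k1)) I = X" .
  define Y where "Y = \<bar>real_of_int k\<bar> powr (s+\<alpha>) * cmod (B2 t u v k)"
  have Y0: "Y \<ge> 0" unfolding Y_def by simp
  have YX: "Y \<le> X" unfolding Y_def eqX[symmetric] by (rule mult_left_mono[OF nB]) simp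
  have "Y^2 \<le> X^2" by (rule power_mono[OF YX Y0])
  moreover have "\<bar>real_of_int k\<bar> powr (2 * (s+\<alpha>)) * (cmod (B2 t u v k))^2 = Y^2"
  proof -
    have e: "\<bar>real_of_int k\<bar> powr (2 * (s+\<alpha>)) = \<bar>real_of_int k\<bar> powr (s+\<alpha>) * \<bar>real_of_int k\<bar> powr (s+\<alpha>)"
      by (subst mult_2, rule powr_add)
    show ?thesis unfolding Y_def e power_mult_distrib power2_eq_square by (simp only: ac_simps)
  qed
  ultimately show "\<bar>real_of_int k\<bar> powr (2 * (s+\<alpha>)) * (cmod (B2 t u v k))^2 \<le> Mc s \<alpha> * infsum (\<lambda>k1. U k1 * V (k - k1)) UNIV"
    using X2 unfolding M_def T_def by simp
qed


theorem lemma7p4: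
  fixes s \<alpha> :: real
  assumes "s + \<alpha> \<ge> 0" and "\<alpha> < 3/4" and "s > -3/4"
  shows "\<exists>C. \<forall>t u v. in_Hdot s u \<longrightarrow> in_Hdot s v \<longrightarrow>
            (\<forall>k\<in>Z0. (\<lambda>k1. norm (B2_term t u v k k1)) summable_on B2_index k)
          \<and> in_Hdot (s + \<alpha>) (B2 t u v)
          \<and> Hdot_norm (s + \<alpha>) (B2 t u v) \<le> C * Hdot_norm s u * Hdot_norm s v"
proof (rule exI[of _ "sqrt (Mc s \<alpha>)"], intro allI impI conjI)
  fix t :: real and u v :: "int \<Rightarrow> complex"
  assume hu: "in_Hdot s u" and hv: "in_Hdot s v"
  define U where "U \<equiv> \<lambda>k. \<bar>real_of_int k\<bar> powr (2 * s) * (cmod (u k))^2"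
  define V where "V \<equiv> \<lambda>k. \<bar>real_of_int k\<bar> powr (2 * s) * (cmod (v k))^2"
  have Us: "U summable_on UNIV" unfolding U_def by (rule U_UNIV(1)[OF hu])
  have Vs: "V summable_on UNIV" unfolding V_def by (rule U_UNIV(1)[OF hv])
  define A where "A = infsum U UNIV"
  define B where "B = infsum V UNIV"
  have A: "A = (Hdot_norm s u)^2" unfolding A_def U_def by (rule U_UNIV(2)[OF hu])
  have B: "B = (Hdot_norm s v)^2" unfolding B_def V_def by (rule U_UNIV(2)[OF hv])
  have U0: "U j \<ge> 0" "V j \<ge> 0" for j unfolding U_def V_def by auto
  have Z0k: "k \<noteq> 0" if "k \<in> Z0" for k using that by (simp add: Z0_def)
  have pk1: "(\<lambda>k1. norm (B2_term t u v k k1)) summable_on B2_index k" if "k \<in> Z0" for k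
    by (rule per_k(1)[OF assms Z0k[OF that]]) (use Us Vs in \<open>simp_all add: U_def V_def\<close>)
  have pk2: "(\<lambda>k1. U k1 * V (k - k1)) summable_on UNIV" if "k \<in> Z0" for k
    unfolding U_def V_def
    by (rule per_k(2)[OF assms Z0k[OF that]]) (use Us Vs in \<open>simp_all add: U_def V_def\<close>)
  have pk3: "\<bar>real_of_int k\<bar> powr (2 * (s+\<alpha>)) * (cmod (B2 t u v k))^2 \<le> Mc s \<alpha> * infsum (\<lambda>k1. U k1 * V (k - k1)) UNIV" if "k \<in> Z0" for k
    using per_k(3)[OF assms Z0k[OF that], of u v t] Us Vs unfolding U_def V_def by simp
  show "\<forall>k\<in>Z0. (\<lambda>k1. norm (B2_term t u v k k1)) summable_on B2_index k"
    using pk1 by blast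
  define T where "T = (\<lambda>k. infsum (\<lambda>k1. U k1 * V (k - k1)) UNIV)"
  have T0: "T k \<ge> 0" for k unfolding T_def by (rule infsum_nonneg) (simp add: U0)
  have Tfin: "sum T F \<le> A * B" if F: "finite F" "F \<subseteq> Z0" for F
  proof -
    have Gs: "\<And>k. k \<in> F \<Longrightarrow> (\<lambda>k1. U k1 * V (k - k1)) summable_on UNIV" using pk2 F by blast
    note fs = infsum_finite_sum[of F "\<lambda>k k1. U k1 * V (k - k1)" UNIV, OF F(1) Gs]
    have "sum T F = infsum (\<lambda>k1. \<Sum>k\<in>F. U k1 * V (k - k1)) UNIV"
      unfolding T_def using fs by simp
    also have "\<dots> \<le> infsum (\<lambda>k1. U k1 * B) UNIV"
    proof (rule infsum_mono)
      show "(\<lambda>k1. \<Sum>k\<in>F. U k1 * V (k - k1)) summable_on UNIV" using fs by simp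
      show "(\<lambda>k1. U k1 * B) summable_on UNIV" by (rule summable_on_cmult_left[OF Us])
      fix k1 :: int
      have "(\<Sum>k\<in>F. V (k - k1)) = sum V ((\<lambda>k. k - k1) ` F)"
        by (subst sum.reindex) (auto simp: inj_on_def)
      also have "\<dots> \<le> B" unfolding B_def
        by (rule finite_sum_le_infsum[OF Vs]) (auto simp: F U0)
      finally have "(\<Sum>k\<in>F. V (k - k1)) \<le> B" .
      then have "U k1 * (\<Sum>k\<in>F. V (k - k1)) \<le> U k1 * B" by (rule mult_left_mono) (simp add: U0)
      then show "(\<Sum>k\<in>F. U k1 * V (k - k1)) \<le> U k1 * B" by (simp add: sum_distrib_left)
    qed
    also have "\<dots> = A * B" unfolding A_def by (rule infsum_cmult_left) (simp add: Us)
    finally show ?thesis .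
  qed
  have Ts: "T summable_on Z0"
    by (rule nonneg_bdd_above_summable_on) (auto simp: T0 intro!: bdd_aboveI2[where M="A*B"] Tfin)
  have Tle: "infsum T Z0 \<le> A * B"
    by (rule infsum_le_finite_sums[OF Ts]) (rule Tfin)
  define M where "M = Mc s \<alpha>"
  define F where "F = (\<lambda>k. \<bar>real_of_int k\<bar> powr (2 * (s + \<alpha>)) * (cmod (B2 t u v k))^2)"
  have FM: "F k \<le> M * T k" if "k \<in> Z0" for k
    using pk3[OF that] unfolding F_def M_def T_def by simp
  have F0: "F k \<ge> 0" for k unfolding F_def by simp
  have MTs: "(\<lambda>k. M * T k) summable_on Z0" by (rule summable_on_cmult_right[OF Ts])
  have Fs: "F summable_on Z0"
    by (rule summable_on_comparison_test[OF MTs]) (auto simp: FM F0)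
  then show "in_Hdot (s + \<alpha>) (B2 t u v)" unfolding in_Hdot_def F_def .
  have M0: "M \<ge> 0"
  proof -
    have "0 \<le> infsum (\<lambda>j::int. \<bar>real_of_int j\<bar> powr (-(4 + 2 * s - 2 * \<alpha>))) UNIV"
      by (rule infsum_nonneg) simp
    then show ?thesis unfolding M_def Mc_def by simp
  qed
  have "infsum F Z0 \<le> infsum (\<lambda>k. M * T k) Z0" by (rule infsum_mono[OF Fs MTs]) (rule FM)
  also have "\<dots> = M * infsum T Z0" by (rule infsum_cmult_right) (simp add: Ts)
  also have "\<dots> \<le> M * (A * B)" by (rule mult_left_mono[OF Tle M0])
  finally have "infsum F Z0 \<le> M * (A * B)" .
  then have "sqrt (infsum F Z0) \<le> sqrt (M * (A * B))" by simp
  also have "\<dots> = sqrt M * Hdot_norm s u * Hdot_norm s v"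
  proof -
    have hn: "Hdot_norm s u \<ge> 0" "Hdot_norm s v \<ge> 0" by (simp_all add: Hdot_norm_def infsum_nonneg)
    show ?thesis unfolding A B using hn by (simp add: real_sqrt_mult)
  qed
  finally show "Hdot_norm (s + \<alpha>) (B2 t u v) \<le> sqrt (Mc s \<alpha>) * Hdot_norm s u * Hdot_norm s v"
    unfolding Hdot_norm_def F_def M_def .
qed

end
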